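(* Let $P$ be the uniform distribution on $[0,1]$ and $\beta=\{\frac14,\frac12\}$. The conditional optimal set of three-points for $P$ with respect to $\beta$ is $\alpha_3=\{\frac14,\frac12,\frac56\}$, with $V_3=\frac{77}{6912}$ ($\approx0.01114$).
   Context: For a Borel probability measure $P$ on $\mathbb{R}$ and finite $\beta$ with $\mathrm{card}(\beta)=r$, for $n\ge r$, $V_n=\inf\{\int\min_{a\in\alpha\cup\beta}(x-a)^2dP(x):\mathrm{card}(\alpha)\le n-r\}$; a set $\alpha\cup\beta$ attaining the infimum, with each point of $\beta$ having a Voronoi region of positive $P$-measure, is a conditional optimal set of $n$-points with respect to $\beta$. *)

theory Defs
  imports "HOL-Analysis.Analysis"
begin

definition distortion :: "real measure \<Rightarrow> real set \<Rightarrow> real" where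
  "distortion P S = (\<integral>x. Min ((\<lambda>a. (x - a)^2) ` S) \<partial>P)"

definition cond_V :: "real measure \<Rightarrow> real set \<Rightarrow> nat \<Rightarrow> real" where
  "cond_V P \<beta> n = (INF \<alpha> \<in> {\<alpha>. finite \<alpha> \<and> card \<alpha> \<le> n - card \<beta>}. distortion P (\<alpha> \<union> \<beta>))"

definition voronoi :: "real set \<Rightarrow> real \<Rightarrow> real set" where
  "voronoi S a = {x. \<forall>b\<in>S. \<bar>x - a\<bar> \<le> \<bar>x - b\<bar>}"

definition cond_optimal :: "real measure \<Rightarrow> real set \<Rightarrow> nat \<Rightarrow> real set \<Rightarrow> bool" where
  "cond_optimal P \<beta> n S \<longleftrightarrow>
     (\<exists>\<alpha>. finite \<alpha> \<and> card \<alpha> \<le> n - card \<beta> \<and> S = \<alpha> \<union> \<beta> \<and>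
          distortion P S = cond_V P \<beta> n \<and>
          (\<forall>b\<in>\<beta>. measure P (voronoi S b) > 0))"

end

theory Submission
  imports Defs
begin

definition G :: "real \<Rightarrow> real \<Rightarrow> real" where
  "G a x = min ((x-a)^2) (min ((x-1/4)^2) ((x-1/2)^2))"

lemma G_cont: "continuous_on A (G a)"
  unfolding G_def by (intro continuous_intros)

lemma sq_int:
  assumes "u \<le> v"
  shows "integral {u..v} (\<lambda>x::real. (x-c)^2) = ((v-c)^3 - (u-c)^3)/3"
proof -
  have "((\<lambda>x::real. (x-c)^2) has_integral ((\<lambda>x. (x-c)^3/3) v - (\<lambda>x. (x-c)^3/3) u)) {u..v}"
    apply (rule fundamental_theorem_of_calculus[OF assms])
    unfolding has_real_derivative_iff_has_vector_derivative[symmetric]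
    by (auto intro!: derivative_eq_intros simp: power2_eq_square)
  then show ?thesis by (simp add: integral_unique diff_divide_distrib)
qed

lemma dist_eq:
  "distortion (uniform_measure lborel {0..1::real}) {a,1/4,1/2} = integral {0..1} (G a)"
proof -
  have u: "uniform_measure lborel {0..1::real} = density lborel (\<lambda>x. ennreal (indicator {0..1::real} x))"
    unfolding uniform_measure_def by (simp add: ennreal_indicator divide_ennreal_def)
  have m: "\<And>x. Min ((\<lambda>s. (x-s)^2) ` {a,1/4,1/2}) = G a x"
    by (simp add: G_def)
  have "distortion (uniform_measure lborel {0..1::real}) {a,1/4,1/2}
     = (\<integral>x. G a x \<partial>density lborel (\<lambda>x. ennreal (indicator {0..1::real} x)))"
    unfolding distortion_def m u ..
  also have "\<dots> = (\<integral>x. indicator {0..1::real} x *\<^sub>R G a x \<partial>lborel)"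
    by (rule integral_density) (auto intro!: borel_measurable_continuous_onI G_cont)
  also have "\<dots> = (LINT x : {0..1} | lborel. G a x)"
    by (simp add: set_lebesgue_integral_def)
  also have "\<dots> = integral {0..1} (G a)"
    by (rule set_borel_integral_eq_integral(2), rule borel_integrable_atLeastAtMost', rule G_cont)
  finally show ?thesis .
qed

lemma Gmin:
  assumes "\<bar>x-c\<bar> \<le> \<bar>x-a\<bar>" "\<bar>x-c\<bar> \<le> \<bar>x-1/4\<bar>" "\<bar>x-c\<bar> \<le> \<bar>x-1/2\<bar>" "c \<in> {a,1/4,1/2}"
  shows "G a x = (x-c)^2"
proof -
  have "(x-c)^2 \<le> (x-a)^2" "(x-c)^2 \<le> (x-1/4)^2" "(x-c)^2 \<le> (x-1/2)^2"
    using assms(1-3) abs_le_square_iff by blast+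
  note * = this
  from assms(4) have "c=a \<or> c=1/4 \<or> c=1/2" by auto
  then show ?thesis using * unfolding G_def by (elim disjE; hypsubst; auto simp: min_def)
qed

lemma G_nonneg: "0 \<le> G a x" unfolding G_def by simp

lemma bad:
  assumes "a \<le> 1/2 \<or> a \<ge> 3/2"
  shows "integral {0..1} (G a) \<ge> 1/24"
proof -
  have "integral {1/2..1} (G a) = integral {1/2..1} (\<lambda>x::real. (x-1/2)^2)"
    by (rule integral_cong, rule Gmin) (use assms in auto)
  also have "\<dots> = 1/24" by (simp add: sq_int power3_eq_cube)
  finally have e: "integral {1/2..1} (G a) = 1/24" .
  have "integral {1/2..1} (G a) \<le> integral {0..1} (G a)"
    by (rule integral_subset_le) (auto intro: integrable_continuous_interval G_cont G_nonneg)
  then show ?thesis using e by simp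
qed

lemma good:
  assumes "1/2 < a" "a < 3/2"
  shows "integral {0..1} (G a) = 77/6912 + (1/4)*(a-5/6)^2*(11/6 - a)"
proof -
  define m where "m = (1/2 + a)/2"
  have m: "3/8 \<le> m" "m \<le> 1" using assms by (auto simp: m_def)
  have I: "G a integrable_on {u..v}" for u v by (rule integrable_continuous_interval, rule G_cont)
  have "integral {0..1} (G a) = integral {0..3/8} (G a) + integral {3/8..1} (G a)"
    by (rule Henstock_Kurzweil_Integration.integral_combine[symmetric]) (auto intro: I)
  also have "integral {3/8..1} (G a) = integral {3/8..m} (G a) + integral {m..1} (G a)"
    by (rule Henstock_Kurzweil_Integration.integral_combine[symmetric]) (use m in \<open>auto intro: I\<close>)
  also have "integral {0..3/8} (G a) = integral {0..3/8} (\<lambda>x::real. (x-1/4)^2)"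
    by (rule integral_cong, rule Gmin) (use assms in auto)
  also have "integral {3/8..m} (G a) = integral {3/8..m} (\<lambda>x::real. (x-1/2)^2)"
    by (rule integral_cong, rule Gmin) (use assms in \<open>auto simp: m_def\<close>)
  also have "integral {m..1} (G a) = integral {m..1} (\<lambda>x::real. (x-a)^2)"
    by (rule integral_cong, rule Gmin) (use assms in \<open>auto simp: m_def\<close>)
  also have "integral {0..3/8} (\<lambda>x::real. (x-1/4)^2) = ((3/8-1/4)^3 - (0-1/4)^3)/3"
    by (rule sq_int) simp
  also have "integral {3/8..m} (\<lambda>x::real. (x-1/2)^2) = ((m-1/2)^3 - (3/8-1/2)^3)/3"
    by (rule sq_int) (rule m)
  also have "integral {m..1} (\<lambda>x::real. (x-a)^2) = ((1-a)^3 - (m-a)^3)/3"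
    by (rule sq_int) (rule m)
  finally show ?thesis
    by (simp add: m_def power3_eq_cube power2_eq_square field_simps)
qed

lemma Dfacts:
  fixes a :: real
  shows "distortion (uniform_measure lborel {0..1::real}) {a,1/4,1/2} \<ge> 77/6912"
    and "distortion (uniform_measure lborel {0..1::real}) {a,1/4,1/2} = 77/6912 \<Longrightarrow> a = 5/6"
    and "distortion (uniform_measure lborel {0..1::real}) {5/6,1/4,1/2} = 77/6912"
proof -
  show "distortion (uniform_measure lborel {0..1::real}) {5/6,1/4,1/2} = 77/6912"
    unfolding dist_eq by (subst good) auto
  have "integral {0..1} (G a) \<ge> 77/6912 \<and> (integral {0..1} (G a) = 77/6912 \<longrightarrow> a = 5/6)"
  proof (cases "a \<le> 1/2 \<or> a \<ge> 3/2")
    case True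
    then show ?thesis using bad[OF True] by auto
  next
    case False
    then have g: "integral {0..1} (G a) = 77/6912 + (1/4)*(a-5/6)^2*(11/6 - a)"
      by (intro good) auto
    have p: "0 < 11/6 - a" using False by auto
    have "0 \<le> (1/4)*(a-5/6)^2*(11/6 - a)" using p by simp
    moreover have "(1/4)*(a-5/6)^2*(11/6 - a) = 0 \<Longrightarrow> a = 5/6" using p by simp
    ultimately show ?thesis using g by auto
  qed
  then show "distortion (uniform_measure lborel {0..1::real}) {a,1/4,1/2} \<ge> 77/6912"
    and "distortion (uniform_measure lborel {0..1::real}) {a,1/4,1/2} = 77/6912 \<Longrightarrow> a = 5/6"
    unfolding dist_eq by auto
qed

lemma feas:
  assumes "finite \<alpha>" "card \<alpha> \<le> 1"
  shows "\<exists>a. \<alpha> \<union> {1/4, 1/2::real} = {a,1/4,1/2}"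
proof (cases "\<alpha> = {}")
  case True
  then show ?thesis by (intro exI[of _ "1/4"]) auto
next
  case False
  then obtain a where a: "a \<in> \<alpha>" by auto
  have "\<forall>x\<in>\<alpha>. \<forall>y\<in>\<alpha>. x = y" using assms card_le_Suc0_iff_eq[OF assms(1)] by simp
  then have "\<alpha> = {a}" using a by auto
  then show ?thesis by auto
qed

theorem proposition3p2:
  defines "P \<equiv> uniform_measure lborel {0..1::real}"
  shows "{S. cond_optimal P {1/4, 1/2} 3 S} = {{1/4, 1/2, 5/6}}
         \<and> cond_V P {1/4, 1/2} 3 = 77/6912"
proof -
  have cb: "card {1/4, 1/2::real} = 2" by simp
  let ?A = "{\<alpha>. finite \<alpha> \<and> card \<alpha> \<le> 3 - card {1/4, 1/2::real}}"
  have A: "?A = {\<alpha>. finite \<alpha> \<and> card \<alpha> \<le> 1}" using cb by simp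
  have lb: "distortion P (\<alpha> \<union> {1/4,1/2}) \<ge> 77/6912" if "\<alpha> \<in> ?A" for \<alpha>
  proof -
    have "finite \<alpha>" "card \<alpha> \<le> 1" using that A by auto
    then obtain a where "\<alpha> \<union> {1/4, 1/2::real} = {a,1/4,1/2}" using feas by blast
    then show ?thesis unfolding P_def using Dfacts(1) by metis
  qed
  have opt: "distortion P ({5/6} \<union> {1/4,1/2}) = 77/6912"
    by (simp only: Un_insert_left Un_empty_left P_def Dfacts(3))
  have in5: "{5/6::real} \<in> ?A" using A by simp
  have V: "cond_V P {1/4, 1/2} 3 = 77/6912"
    unfolding cond_V_def
    by (rule cInf_eq_minimum) (use lb opt in5 in \<open>force+\<close>)
  have S: "{S. cond_optimal P {1/4, 1/2} 3 S} = {{1/4, 1/2, 5/6}}"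
  proof (intro set_eqI iffI)
    fix S assume "S \<in> {S. cond_optimal P {1/4, 1/2} 3 S}"
    then obtain \<alpha> where \<alpha>: "\<alpha> \<in> ?A" "S = \<alpha> \<union> {1/4,1/2}" "distortion P S = 77/6912"
      unfolding cond_optimal_def V by auto
    obtain a where "\<alpha> \<union> {1/4, 1/2::real} = {a,1/4,1/2}" using feas \<alpha>(1) A by auto
    with \<alpha> have "S = {a,1/4,1/2}" "a = 5/6" unfolding P_def using Dfacts(2) by auto
    then show "S \<in> {{1/4, 1/2, 5/6}}" by auto
  next
    fix S assume "S \<in> {{1/4, 1/2, 5/6::real}}"
    then have S: "S = {5/6} \<union> {1/4,1/2}" by auto
    have v1: "voronoi S (1/4) = {..3/8}" unfolding S voronoi_def by auto
    have v2: "voronoi S (1/2) = {3/8..2/3}" unfolding S voronoi_def by auto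
    have m1: "measure P (voronoi S (1/4)) = 3/8"
      unfolding v1 P_def by (subst measure_uniform_measure) auto
    have m2: "measure P (voronoi S (1/2)) = 7/24"
      unfolding v2 P_def by (subst measure_uniform_measure) auto
    show "S \<in> {S. cond_optimal P {1/4, 1/2} 3 S}"
      unfolding cond_optimal_def using in5 S opt V m1 m2 by (intro CollectI exI[of _ "{5/6}"]) auto
  qed
  show ?thesis using S V by simp
qed
end
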